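(* Let $k\ge3$ and let $G=(V,E)$ be a connected $k$-uniform hypergraph (with $E\neq\emptyset$). (i) A nonzero vector $\mathbf x\in\mathbb C^n$ is an eigenvector of the Laplacian tensor $\mathcal D-\mathcal A$ corresponding to the eigenvalue $0$ if and only if there exist $\gamma\in\mathbb C\setminus\{0\}$ and integers $\alpha_i$ ($i\in[n]$) such that $x_i=\gamma\exp(\frac{2\alpha_i\pi}{k}\sqrt{-1})$ for all $i\in[n]$ and, for every edge $e\in E$, $\sum_{j\in e}\alpha_j=\sigma_e k$ for some integer $\sigma_e$. (ii) A nonzero vector $\mathbf x\in\mathbb C^n$ is an eigenvector of the signless Laplacian tensor $\mathcal D+\mathcal A$ corresponding to the eigenvalue $0$ if and only if there exist $\gamma\in\mathbb C\setminus\{0\}$ and integers $\alpha_i$ ($i\in[n]$) such that $x_i=\gamma\exp(\frac{2\alpha_i\pi}{k}\sqrt{-1})$ for all $i\in[n]$ and, for every edge $e\in E$, $\sum_{j\in e}\alpha_j=\sigma_e k+\frac{k}{2}$ for some integer $\sigma_e$.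
   Context: A $k$-uniform hypergraph $G=(V,E)$ has vertex set $V=[n]$ ($n\ge k$) and edge set $E$ of $k$-element subsets of $V$; $E_i=\{e\in E:i\in e\}$, $d_i=|E_i|$. $G$ is connected if every two distinct vertices $i,j$ are joined by a sequence of edges $e_1,\dots,e_m$ with $i\in e_1$, $j\in e_m$, $e_r\cap e_{r+1}\neq\emptyset$. The adjacency tensor $\mathcal A$ has $a_{i_1\dots i_k}=\frac1{(k-1)!}$ if $\{i_1,\dots,i_k\}\in E$, else $0$; $\mathcal D$ is diagonal with $d_{i\dots i}=d_i$. Thus $((\mathcal D\pm\mathcal A)\mathbf x^{k-1})_i=d_ix_i^{k-1}\pm\sum_{e\in E_i}\prod_{j\in e\setminus\{i\}}x_j$. A nonzero $\mathbf x\in\mathbb C^n$ is an eigenvector of a tensor $\mathcal T$ for eigenvalue $\lambda$ if $(\mathcal T\mathbf x^{k-1})_i=\lambda x_i^{k-1}$ for all $i\in[n]$, where $(\mathcal T\mathbf x^{k-1})_i=\sum_{i_2,\dots,i_k}t_{ii_2\dots i_k}x_{i_2}\cdots x_{i_k}$. *)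

theory Defs
  imports "HOL-Analysis.Analysis"
begin

definition uniform_hypergraph :: "nat \<Rightarrow> nat \<Rightarrow> nat set set \<Rightarrow> bool" where
  "uniform_hypergraph n k E \<longleftrightarrow> n \<ge> k \<and> (\<forall>e\<in>E. e \<subseteq> {1..n} \<and> card e = k)"

definition hg_connected :: "nat \<Rightarrow> nat set set \<Rightarrow> bool" where
  "hg_connected n E \<longleftrightarrow> (\<forall>i\<in>{1..n}. \<forall>j\<in>{1..n}. i \<noteq> j \<longrightarrow>
     (\<exists>es :: nat set list. es \<noteq> [] \<and> set es \<subseteq> E \<and> i \<in> hd es \<and> j \<in> last es \<and>
        (\<forall>r. Suc r < length es \<longrightarrow> es ! r \<inter> es ! Suc r \<noteq> {})))"

definition hg_degree :: "nat set set \<Rightarrow> nat \<Rightarrow> nat" where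
  "hg_degree E i = card {e\<in>E. i \<in> e}"

text \<open>Order-k tensors of dimension n: entries indexed by lists of length k over [n].\<close>

definition adj_tensor :: "nat \<Rightarrow> nat set set \<Rightarrow> nat list \<Rightarrow> complex" where
  "adj_tensor k E is = (if set is \<in> E then 1 / of_nat (fact (k - 1)) else 0)"

definition deg_tensor :: "nat set set \<Rightarrow> nat list \<Rightarrow> complex" where
  "deg_tensor E is = (if is \<noteq> [] \<and> (\<forall>j\<in>set is. j = hd is) then of_nat (hg_degree E (hd is)) else 0)"

definition tensor_apply :: "nat \<Rightarrow> nat \<Rightarrow> (nat list \<Rightarrow> complex) \<Rightarrow> (nat \<Rightarrow> complex) \<Rightarrow> nat \<Rightarrow> complex" where
  "tensor_apply n k T x i =
     (\<Sum>is\<in>{is. length is = k - 1 \<and> set is \<subseteq> {1..n}}. T (i # is) * (\<Prod>j\<leftarrow>is. x j))"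

definition tensor_eigenpair :: "nat \<Rightarrow> nat \<Rightarrow> (nat list \<Rightarrow> complex) \<Rightarrow> complex \<Rightarrow> (nat \<Rightarrow> complex) \<Rightarrow> bool" where
  "tensor_eigenpair n k T lam x \<longleftrightarrow> (\<exists>i\<in>{1..n}. x i \<noteq> 0) \<and>
     (\<forall>i\<in>{1..n}. tensor_apply n k T x i = lam * x i ^ (k - 1))"

definition laplacian_tensor :: "nat \<Rightarrow> nat set set \<Rightarrow> nat list \<Rightarrow> complex" where
  "laplacian_tensor k E is = deg_tensor E is - adj_tensor k E is"

definition signless_laplacian_tensor :: "nat \<Rightarrow> nat set set \<Rightarrow> nat list \<Rightarrow> complex" where
  "signless_laplacian_tensor k E is = deg_tensor E is + adj_tensor k E is"

end

theory Submission
  imports Defs "HOL-Combinatorics.Multiset_Permutations"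
begin

lemma norm_diff_sq: "(norm (z - u))^2 = (norm z)^2 + (norm u)^2 - 2 * Re (z * cnj u)"
  unfolding cmod_power2 by (simp add: power2_eq_square algebra_simps)

lemma sum_eq_max:
  fixes z :: "'a \<Rightarrow> complex"
  assumes fin: "finite T" and le: "\<forall>e\<in>T. norm (z e) \<le> R"
    and s: "(\<Sum>e\<in>T. z e) = of_nat (card T) * u" and nu: "norm u = R"
  shows "\<forall>e\<in>T. z e = u"
proof -
  have R0: "R \<ge> 0" using nu by auto
  have "(\<Sum>e\<in>T. (norm (z e - u))^2) = (\<Sum>e\<in>T. (norm (z e))^2) + card T * R^2 - 2 * (\<Sum>e\<in>T. Re (z e * cnj u))"
    by (simp add: norm_diff_sq sum.distrib sum_subtractf sum_distrib_left nu)
  also have "(\<Sum>e\<in>T. Re (z e * cnj u)) = Re ((\<Sum>e\<in>T. z e) * cnj u)"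
    by (simp add: sum_distrib_right)
  also have "\<dots> = card T * R^2"
    using s nu by (simp add: mult.assoc complex_mult_cnj flip: cmod_power2)
  also have "(\<Sum>e\<in>T. (norm (z e))^2) \<le> (\<Sum>e\<in>T. R^2)"
    by (rule sum_mono) (use le norm_ge_zero in \<open>auto intro: power_mono\<close>)
  finally have "(\<Sum>e\<in>T. (norm (z e - u))^2) \<le> 0" by simp
  then have "(\<Sum>e\<in>T. (norm (z e - u))^2) = 0"
    by (meson antisym sum_nonneg zero_le_power2)
  then have "\<forall>e\<in>T. (norm (z e - u))^2 = 0"
    by (subst (asm) sum_nonneg_eq_0_iff[OF fin]) auto
  then show ?thesis by simp
qed

lemma conn_closure:
  assumes conn: "hg_connected n E" and sub: "\<forall>e\<in>E. e \<subseteq> {1..n}"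
    and i0: "i0 \<in> {1..n}" "P i0"
    and cl: "\<forall>e\<in>E. (\<exists>i\<in>e. P i) \<longrightarrow> (\<forall>j\<in>e. P j)"
  shows "\<forall>j\<in>{1..n}. P j"
proof
  fix j assume j: "j \<in> {1..n}"
  show "P j"
  proof (cases "j = i0")
    case True then show ?thesis using i0 by simp
  next
    case False
    then obtain es where es: "es \<noteq> []" "set es \<subseteq> E" "i0 \<in> hd es" "j \<in> last es"
        "\<forall>r. Suc r < length es \<longrightarrow> es ! r \<inter> es ! Suc r \<noteq> {}"
      using conn[unfolded hg_connected_def, rule_format, OF i0(1) j not_sym[OF False]] by (elim exE conjE) simp
    have "\<forall>v\<in>es ! r. P v" if "r < length es" for r
      using that
    proof (induction r)
      case 0
      have "es ! 0 \<in> E" using es(1,2) by (simp add: hd_conv_nth[symmetric]) (metis hd_in_set subsetD)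
      moreover have "i0 \<in> es ! 0" using es(1,3) by (simp add: hd_conv_nth)
      ultimately show ?case using cl i0 by blast
    next
      case (Suc r)
      have "es ! Suc r \<in> E" using es(2) Suc.prems by (meson nth_mem subsetD)
      moreover obtain v where "v \<in> es ! r" "v \<in> es ! Suc r" using es(5) Suc.prems by blast
      moreover have "P v" using Suc calculation by simp
      ultimately show ?case using cl by blast
    qed
    moreover have "last es = es ! (length es - 1)" using es(1) by (simp add: last_conv_nth)
    ultimately show ?thesis using es(1,4) by (metis diff_less length_greater_0_conv zero_less_one)
  qed
qed

definition rho :: "nat \<Rightarrow> int \<Rightarrow> complex" where
  "rho k a = exp (complex_of_real (2 * real_of_int a * pi / real k) * \<i>)"

lemma rho_pow: "k > 0 \<Longrightarrow> rho k a ^ k = 1"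
proof -
  assume k: "k > 0"
  have "rho k a ^ k = exp (of_nat k * (complex_of_real (2 * real_of_int a * pi / real k) * \<i>))"
    by (simp only: rho_def exp_of_nat_mult)
  also have "of_nat k * (complex_of_real (2 * real_of_int a * pi / real k) * \<i>) = complex_of_real (2 * real_of_int a * pi) * \<i>"
    using k by (simp add: of_real_divide field_simps)
  also have "exp (complex_of_real (2 * real_of_int a * pi) * \<i>) = 1"
    by (rule exp_eq_1[THEN iffD2]) auto
  finally show ?thesis .
qed

lemma root_unity:
  assumes "w ^ k = 1" "k > 0"
  shows "\<exists>m::int. w = rho k m"
proof -
  have w0: "w \<noteq> 0" using assms by (metis power_0_left zero_neq_one neq0_conv)
  have "exp (of_nat k * Ln w) = 1" using assms w0 by (simp add: exp_of_nat_mult)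
  then obtain m :: int where m: "Re (of_nat k * Ln w) = 0" "Im (of_nat k * Ln w) = of_int (2*m) * pi"
    by (auto simp: exp_eq_1)
  have "Ln w = complex_of_real (2 * real_of_int m * pi / real k) * \<i>"
    using m assms(2) by (simp add: complex_eq_iff field_simps)
  then have "w = rho k m" using w0 by (metis exp_Ln rho_def)
  then show ?thesis ..
qed

lemma rho_eq_1: "k > 0 \<Longrightarrow> rho k s = 1 \<longleftrightarrow> (\<exists>\<sigma>::int. s = \<sigma> * int k)"
proof -
  assume k: "k > 0"
  have "rho k s = 1 \<longleftrightarrow> (\<exists>m::int. 2 * real_of_int s * pi / real k = of_int (2*m) * pi)"
    by (simp add: rho_def exp_eq_1)
  also have "\<dots> \<longleftrightarrow> (\<exists>m::int. real_of_int s = of_int m * real k)"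
    using k by (intro ex_cong1) (auto simp: field_simps)
  also have "\<dots> \<longleftrightarrow> (\<exists>\<sigma>::int. s = \<sigma> * int k)"
    by (intro ex_cong1) (metis of_int_eq_iff of_int_mult of_int_of_nat_eq)
  finally show ?thesis .
qed

lemma rho_eq_m1: "k > 0 \<Longrightarrow> rho k s = -1 \<longleftrightarrow> (\<exists>\<sigma>::int. 2 * s = 2 * \<sigma> * int k + int k)"
proof -
  assume k: "k > 0"
  have e: "exp (pi * \<i>) = -1" by (simp add: exp_pi_i)
  have "rho k s = -1 \<longleftrightarrow> exp (complex_of_real (2 * real_of_int s * pi / real k) * \<i> + pi * \<i>) = 1"
    by (simp add: rho_def exp_add e) (metis minus_equation_iff)
  also have "\<dots> \<longleftrightarrow> (\<exists>m::int. 2 * real_of_int s * pi / real k + pi = of_int (2*m) * pi)"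
    by (simp add: exp_eq_1)
  also have "\<dots> \<longleftrightarrow> (\<exists>m::int. 2 * real_of_int s + real k = 2 * of_int m * real k)"
    using k by (intro ex_cong1) (auto simp: field_simps, simp_all only: distrib_left[symmetric] mult_left_cancel[OF pi_neq_zero])
  also have "\<dots> \<longleftrightarrow> (\<exists>m::int. 2 * s + int k = 2 * m * int k)"
    by (intro ex_cong1) (metis (mono_tags) of_int_eq_iff of_int_mult of_int_add of_int_of_nat_eq of_int_numeral)
  also have "\<dots> \<longleftrightarrow> (\<exists>\<sigma>::int. 2 * s = 2 * \<sigma> * int k + int k)"
  proof
    assume "\<exists>m::int. 2 * s + int k = 2 * m * int k"
    then obtain m where "2 * s + int k = 2 * m * int k" by blast
    then have "2 * s = 2 * (m - 1) * int k + int k" by (simp add: algebra_simps)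
    then show "\<exists>\<sigma>::int. 2 * s = 2 * \<sigma> * int k + int k" by blast
  next
    assume "\<exists>\<sigma>::int. 2 * s = 2 * \<sigma> * int k + int k"
    then obtain m where "2 * s = 2 * m * int k + int k" by blast
    then have "2 * s + int k = 2 * (m + 1) * int k" by (simp add: algebra_simps)
    then show "\<exists>m::int. 2 * s + int k = 2 * m * int k" by blast
  qed
  finally show ?thesis .
qed

lemma rho_sum: "finite e \<Longrightarrow> (\<Prod>j\<in>e. rho k (a j)) = rho k (\<Sum>j\<in>e. a j)"
  by (induction e rule: finite_induct) (simp_all add: rho_def exp_add[symmetric] distrib_left distrib_right add_divide_distrib)


lemma prod_eq_max:
  fixes f :: "'a \<Rightarrow> real"
  assumes fin: "finite A" and bnd: "\<forall>a\<in>A. 0 \<le> f a \<and> f a \<le> M" and M: "M > 0"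
    and eq: "(\<Prod>a\<in>A. f a) = M ^ card A"
  shows "\<forall>a\<in>A. f a = M"
proof (rule ccontr)
  assume "\<not> (\<forall>a\<in>A. f a = M)"
  then obtain a where a: "a \<in> A" "f a < M" using bnd by force
  have "(\<Prod>a\<in>A. f a) = f a * (\<Prod>b\<in>A-{a}. f b)" using prod.remove[OF fin a(1), of f] by simp
  also have "\<dots> \<le> f a * M ^ (card A - 1)"
  proof (rule mult_left_mono)
    have "(\<Prod>b\<in>A-{a}. f b) \<le> (\<Prod>b\<in>A-{a}. M)" by (rule prod_mono) (use bnd in auto)
    then show "(\<Prod>b\<in>A-{a}. f b) \<le> M ^ (card A - 1)" using fin a(1) by simp
  qed (use bnd a in auto)
  also have "\<dots> < M * M ^ (card A - 1)" using a M by simp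
  also have "\<dots> = M ^ card A"
  proof -
    have "card A > 0" using fin a(1) card_gt_0_iff by blast
    then show ?thesis by (cases "card A") auto
  qed
  finally show False using eq by simp
qed

lemma eig_char:
  fixes x :: "nat \<Rightarrow> complex" and t :: complex
  assumes k3: "k \<ge> 3" and U: "uniform_hypergraph n k E" and C: "hg_connected n E"
    and t: "t = 1 \<or> t = -1"
  shows "((\<exists>i\<in>{1..n}. x i \<noteq> 0) \<and> (\<forall>i\<in>{1..n}. (\<Sum>e\<in>{e\<in>E. i\<in>e}. \<Prod>j\<in>e-{i}. x j) = t * of_nat (hg_degree E i) * x i ^ (k-1)))
     \<longleftrightarrow> (\<exists>c. c \<noteq> 0 \<and> (\<forall>i\<in>{1..n}. x i ^ k = c) \<and> (\<forall>e\<in>E. (\<Prod>j\<in>e. x j) = t * c))"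
proof -
  have sub: "\<forall>e\<in>E. e \<subseteq> {1..n}" and ck: "\<forall>e\<in>E. card e = k" and nk: "n \<ge> k"
    using U by (auto simp: uniform_hypergraph_def)
  have fine: "finite e" if "e \<in> E" for e using sub that by (meson finite_atLeastAtMost finite_subset)
  have finE: "finite E"
  proof -
    have "E \<subseteq> Pow {1..n}" using sub by auto
    then show ?thesis by (rule finite_subset) simp
  qed
  have nt: "norm t = 1" "t \<noteq> 0" using t by auto
  show ?thesis
  proof
    assume "(\<exists>i\<in>{1..n}. x i \<noteq> 0) \<and> (\<forall>i\<in>{1..n}. (\<Sum>e\<in>{e\<in>E. i\<in>e}. \<Prod>j\<in>e-{i}. x j) = t * of_nat (hg_degree E i) * x i ^ (k-1))"
    then have nz: "\<exists>i\<in>{1..n}. x i \<noteq> 0"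
      and eq: "\<forall>i\<in>{1..n}. (\<Sum>e\<in>{e\<in>E. i\<in>e}. \<Prod>j\<in>e-{i}. x j) = t * of_nat (hg_degree E i) * x i ^ (k-1)"
      by auto
    define M where "M = Max ((\<lambda>i. norm (x i)) ` {1..n})"
    have Mge: "norm (x i) \<le> M" if "i \<in> {1..n}" for i unfolding M_def using that by simp
    obtain i0 where i0: "i0 \<in> {1..n}" "norm (x i0) = M"
    proof -
      have "M \<in> (\<lambda>i. norm (x i)) ` {1..n}" unfolding M_def using nk k3 by (intro Max_in) auto
      then show ?thesis using that by auto
    qed
    have Mpos: "M > 0"
    proof -
      obtain i where i: "i \<in> {1..n}" "x i \<noteq> 0" using nz by blast
      then have "0 < norm (x i)" by simp
      also have "\<dots> \<le> M" using Mge[OF i(1)] .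
      finally show ?thesis .
    qed
    have K: "\<forall>e\<in>{e\<in>E. i\<in>e}. (\<Prod>j\<in>e-{i}. x j) = t * x i ^ (k-1) \<and> (\<forall>j\<in>e. norm (x j) = M)"
      if i: "i \<in> {1..n}" "norm (x i) = M" for i
    proof -
      let ?T = "{e\<in>E. i\<in>e}"
      have finT: "finite ?T" using finE by simp
      have cardT: "hg_degree E i = card ?T" by (simp add: hg_degree_def)
      have cd: "card (e - {i}) = k - 1" if "e \<in> ?T" for e using that ck fine by auto
      have le: "\<forall>e\<in>?T. norm (\<Prod>j\<in>e-{i}. x j) \<le> M ^ (k-1)"
      proof
        fix e assume e: "e \<in> ?T"
        have "norm (\<Prod>j\<in>e-{i}. x j) = (\<Prod>j\<in>e-{i}. norm (x j))" by (simp add: prod_norm)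
        also have "\<dots> \<le> (\<Prod>j\<in>e-{i}. M)"
        proof (rule prod_mono)
          fix j assume "j \<in> e - {i}"
          then have "j \<in> {1..n}" using e sub by blast
          then show "0 \<le> norm (x j) \<and> norm (x j) \<le> M" using Mge by simp
        qed
        also have "\<dots> = M ^ (k-1)" using cd[OF e] by simp
        finally show "norm (\<Prod>j\<in>e-{i}. x j) \<le> M ^ (k-1)" .
      qed
      have all: "\<forall>e\<in>?T. (\<Prod>j\<in>e-{i}. x j) = t * x i ^ (k-1)"
      proof (rule sum_eq_max[OF finT le])
        show "(\<Sum>e\<in>?T. \<Prod>j\<in>e-{i}. x j) = of_nat (card ?T) * (t * x i ^ (k-1))"
          using eq i by (simp add: cardT mult_ac)
        show "norm (t * x i ^ (k-1)) = M ^ (k-1)" using nt i by (simp add: norm_mult norm_power)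
      qed
      have "\<forall>j\<in>e. norm (x j) = M" if e: "e \<in> ?T" for e
      proof -
        have "(\<Prod>j\<in>e-{i}. norm (x j)) = norm (\<Prod>j\<in>e-{i}. x j)" by (simp add: prod_norm)
        also have "\<dots> = M ^ (k-1)" using all e nt i by (simp add: norm_mult norm_power)
        finally have "(\<Prod>j\<in>e-{i}. norm (x j)) = M ^ card (e - {i})" using cd[OF e] by simp
        then have "\<forall>j\<in>e-{i}. norm (x j) = M"
        proof (intro prod_eq_max)
          show "finite (e - {i})" using e fine by simp
          show "\<forall>a\<in>e - {i}. 0 \<le> norm (x a) \<and> norm (x a) \<le> M"
          proof
            fix j assume "j \<in> e - {i}"
            then have "j \<in> {1..n}" using e sub by blast
            then show "0 \<le> norm (x j) \<and> norm (x j) \<le> M" using Mge by simp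
          qed
        qed (use Mpos in auto)
        then show ?thesis using i by auto
      qed
      then show ?thesis using all by blast
    qed
    have allM: "\<forall>j\<in>{1..n}. norm (x j) = M"
    proof (rule conn_closure[OF C sub i0(1), where P="\<lambda>j. norm (x j) = M"])
      show "norm (x i0) = M" by (rule i0(2))
      show "\<forall>e\<in>E. (\<exists>i\<in>e. norm (x i) = M) \<longrightarrow> (\<forall>j\<in>e. norm (x j) = M)"
      proof (intro ballI impI)
        fix e j assume e: "e \<in> E" and ex: "\<exists>i\<in>e. norm (x i) = M" and j: "j \<in> e"
        then obtain i where i: "i \<in> e" "norm (x i) = M" by blast
        have "i \<in> {1..n}" using e i sub by blast
        from K[OF this i(2)] have "\<forall>j\<in>e. norm (x j) = M" using e i(1) by blast
        then show "norm (x j) = M" using j by blast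
      qed
    qed
    have pe: "(\<Prod>j\<in>e. x j) = t * x i ^ k" if e: "e \<in> E" "i \<in> e" for e i
    proof -
      have i: "i \<in> {1..n}" using e sub by blast
      have "(\<Prod>j\<in>e. x j) = x i * (\<Prod>j\<in>e-{i}. x j)" using prod.remove[OF fine[OF e(1)] e(2)] by simp
      also have "\<dots> = x i * (t * x i ^ (k-1))"
      proof -
        have "e \<in> {e\<in>E. i\<in>e}" using e by simp
        then have "(\<Prod>j\<in>e-{i}. x j) = t * x i ^ (k-1)" using K[OF i allM[rule_format, OF i]] by blast
        then show ?thesis by simp
      qed
      also have "\<dots> = t * x i ^ k" using k3 by (cases k) (auto simp: mult_ac)
      finally show ?thesis .
    qed
    have allc: "\<forall>j\<in>{1..n}. x j ^ k = x i0 ^ k"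
    proof (rule conn_closure[OF C sub i0(1)])
      show "\<forall>e\<in>E. (\<exists>i\<in>e. x i ^ k = x i0 ^ k) \<longrightarrow> (\<forall>j\<in>e. x j ^ k = x i0 ^ k)"
      proof (intro ballI impI)
        fix e j assume e: "e \<in> E" and "\<exists>i\<in>e. x i ^ k = x i0 ^ k" and j: "j \<in> e"
        then obtain i where i: "i \<in> e" "x i ^ k = x i0 ^ k" by blast
        have "t * x j ^ k = t * x i ^ k" using pe[OF e i(1)] pe[OF e j] by simp
        then show "x j ^ k = x i0 ^ k" using nt i by simp
      qed
    qed simp
    have c0: "x i0 ^ k \<noteq> 0" using i0 Mpos by auto
    have "\<forall>e\<in>E. (\<Prod>j\<in>e. x j) = t * x i0 ^ k"
    proof
      fix e assume e: "e \<in> E"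
      then have "e \<noteq> {}" using ck k3 by auto
      then obtain i where i: "i \<in> e" by blast
      have "i \<in> {1..n}" using sub e i by blast
      then have "x i ^ k = x i0 ^ k" using allc by blast
      then show "(\<Prod>j\<in>e. x j) = t * x i0 ^ k" using pe[OF e i] by simp
    qed
    then show "\<exists>c. c \<noteq> 0 \<and> (\<forall>i\<in>{1..n}. x i ^ k = c) \<and> (\<forall>e\<in>E. (\<Prod>j\<in>e. x j) = t * c)"
      using c0 allc by blast
  next
    assume "\<exists>c. c \<noteq> 0 \<and> (\<forall>i\<in>{1..n}. x i ^ k = c) \<and> (\<forall>e\<in>E. (\<Prod>j\<in>e. x j) = t * c)"
    then obtain c where c: "c \<noteq> 0" "\<forall>i\<in>{1..n}. x i ^ k = c" "\<forall>e\<in>E. (\<Prod>j\<in>e. x j) = t * c" by blast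
    have xnz: "x i \<noteq> 0" if "i \<in> {1..n}" for i
    proof
      assume "x i = 0"
      then have "x i ^ k = 0" using k3 by simp
      then show False using c(1) c(2)[rule_format, OF that] by simp
    qed
    have "1 \<in> {1..n}" using nk k3 by simp
    then have nz: "\<exists>i\<in>{1..n}. x i \<noteq> 0" using xnz by blast
    have "(\<Sum>e\<in>{e\<in>E. i\<in>e}. \<Prod>j\<in>e-{i}. x j) = t * of_nat (hg_degree E i) * x i ^ (k-1)"
      if i: "i \<in> {1..n}" for i
    proof -
      have tm: "(\<Prod>j\<in>e-{i}. x j) = t * x i ^ (k-1)" if e: "e \<in> E" "i \<in> e" for e
      proof -
        have "x i * (\<Prod>j\<in>e-{i}. x j) = (\<Prod>j\<in>e. x j)" using prod.remove[OF fine[OF e(1)] e(2), of x] by simp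
        also have "\<dots> = t * x i ^ k" using c e i by simp
        also have "\<dots> = x i * (t * x i ^ (k-1))" using k3 by (cases k) (auto simp: mult_ac)
        finally show ?thesis using xnz[OF i] by simp
      qed
      have "(\<Sum>e\<in>{e\<in>E. i\<in>e}. \<Prod>j\<in>e-{i}. x j) = (\<Sum>e\<in>{e\<in>E. i\<in>e}. t * x i ^ (k-1))"
        using tm by (intro sum.cong) auto
      also have "\<dots> = t * of_nat (hg_degree E i) * x i ^ (k-1)" by (simp add: hg_degree_def mult_ac)
      finally show ?thesis .
    qed
    then show "(\<exists>i\<in>{1..n}. x i \<noteq> 0) \<and> (\<forall>i\<in>{1..n}. (\<Sum>e\<in>{e\<in>E. i\<in>e}. \<Prod>j\<in>e-{i}. x j) = t * of_nat (hg_degree E i) * x i ^ (k-1))"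
      using nz by blast
  qed
qed


lemma deg_apply:
  assumes "i \<in> {1..n}"
  shows "tensor_apply n k (deg_tensor E) x i = of_nat (hg_degree E i) * x i ^ (k-1)"
proof -
  let ?S = "{ys. length ys = k - 1 \<and> set ys \<subseteq> {1..n}}"
  let ?r = "replicate (k-1) i"
  have fin: "finite ?S" using finite_lists_length_eq[of "{1..n}" "k-1"] by (simp add: conj_commute)
  have r: "?r \<in> ?S" using assms by auto
  have "tensor_apply n k (deg_tensor E) x i = (\<Sum>ys\<in>?S. deg_tensor E (i # ys) * (\<Prod>j\<leftarrow>ys. x j))"
    by (simp add: tensor_apply_def)
  also have "\<dots> = deg_tensor E (i # ?r) * (\<Prod>j\<leftarrow>?r. x j)"
  proof -
    have "(\<Sum>ys\<in>?S. deg_tensor E (i # ys) * (\<Prod>j\<leftarrow>ys. x j)) = (\<Sum>ys\<in>{?r}. deg_tensor E (i # ys) * (\<Prod>j\<leftarrow>ys. x j))"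
    proof (rule sum.mono_neutral_left[OF fin, symmetric])
      show "{?r} \<subseteq> ?S" using r by simp
      show "\<forall>ys\<in>?S - {?r}. deg_tensor E (i # ys) * (\<Prod>j\<leftarrow>ys. x j) = 0"
      proof
    fix ys assume "ys \<in> ?S - {?r}"
    then have "\<not> (\<forall>j\<in>set ys. j = i)"
      using replicate_length_same[of "ys" i] by auto
    then show "deg_tensor E (i # ys) * (\<Prod>j\<leftarrow>ys. x j) = 0"
      by (auto simp: deg_tensor_def)
  qed
    qed
    then show ?thesis by simp
  qed
  also have "\<dots> = of_nat (hg_degree E i) * x i ^ (k-1)"
    by (simp add: deg_tensor_def prod_list_replicate)
  finally show ?thesis .
qed

lemma adj_apply:
  assumes "uniform_hypergraph n k E" "i \<in> {1..n}" "k \<ge> 1"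
  shows "tensor_apply n k (adj_tensor k E) x i = (\<Sum>e\<in>{e\<in>E. i\<in>e}. \<Prod>j\<in>e-{i}. x j)"
proof -
  let ?S = "{ys. length ys = k - 1 \<and> set ys \<subseteq> {1..n}}"
  let ?S' = "{ys\<in>?S. set (i#ys) \<in> E}"
  let ?T = "{e\<in>E. i\<in>e}"
  let ?c = "1 / of_nat (fact (k - 1)) :: complex"
  have fin: "finite ?S" using finite_lists_length_eq[of "{1..n}" "k-1"] by (simp add: conj_commute)
  have finS': "finite ?S'" by (rule finite_subset[OF _ fin]) auto
  have finE: "finite E"
  proof -
    have "E \<subseteq> Pow {1..n}" using assms(1) by (auto simp: uniform_hypergraph_def)
    then show ?thesis by (rule finite_subset) simp
  qed
  have edge: "e \<subseteq> {1..n} \<and> card e = k" if "e \<in> E" for e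
    using assms(1) that by (auto simp: uniform_hypergraph_def)
  have "tensor_apply n k (adj_tensor k E) x i = (\<Sum>ys\<in>?S. (if set (i#ys) \<in> E then ?c else 0) * (\<Prod>j\<leftarrow>ys. x j))"
    by (simp add: tensor_apply_def adj_tensor_def)
  also have "\<dots> = (\<Sum>ys\<in>?S. if set (i#ys) \<in> E then ?c * (\<Prod>j\<leftarrow>ys. x j) else 0)"
    by (rule sum.cong) auto
  also have "\<dots> = (\<Sum>ys\<in>?S'. ?c * (\<Prod>j\<leftarrow>ys. x j))"
    by (rule sum.inter_filter[OF fin, symmetric])
  also have "\<dots> = (\<Sum>e\<in>?T. \<Sum>ys\<in>{ys\<in>?S'. set (i#ys) = e}. ?c * (\<Prod>j\<leftarrow>ys. x j))"
    by (rule sum.group[symmetric]) (use finS' finE in auto)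
  also have "\<dots> = (\<Sum>e\<in>?T. \<Prod>j\<in>e-{i}. x j)"
  proof (rule sum.cong[OF refl])
    fix e assume e: "e \<in> ?T"
    have fe: "finite e" using edge[of e] e by (auto intro: finite_subset)
    have eq: "{ys\<in>?S'. set (i#ys) = e} = permutations_of_set (e - {i})"
    proof (intro set_eqI iffI)
      fix ys assume h: "ys \<in> {ys\<in>?S'. set (i#ys) = e}"
      then have "card (set (i#ys)) = length (i#ys)" using edge[of e] e assms(3) by auto
      then have "distinct (i#ys)" by (rule card_distinct)
      then show "ys \<in> permutations_of_set (e - {i})" using h
        by (auto simp: permutations_of_set_def)
    next
      fix ys assume h: "ys \<in> permutations_of_set (e - {i})"
      then have d: "distinct ys" "set ys = e - {i}" by (auto simp: permutations_of_set_def)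
      have "length ys = card (e - {i})" using distinct_card[OF d(1)] d(2) by simp
      also have "\<dots> = k - 1" using e edge[of e] fe by simp
      finally have len: "length ys = k - 1" .
      have ins: "insert i e = e" using e by auto
      show "ys \<in> {ys\<in>?S'. set (i#ys) = e}" using d e edge[of e] len ins by auto
    qed
    have "(\<Sum>ys\<in>{ys\<in>?S'. set (i#ys) = e}. ?c * (\<Prod>j\<leftarrow>ys. x j))
        = (\<Sum>ys\<in>permutations_of_set (e - {i}). ?c * (\<Prod>j\<in>e-{i}. x j))"
      unfolding eq
    proof (rule sum.cong[OF refl])
      fix ys assume "ys \<in> permutations_of_set (e - {i})"
      then have d: "distinct ys" "set ys = e - {i}" by (auto simp: permutations_of_set_def)
      show "?c * (\<Prod>j\<leftarrow>ys. x j) = ?c * (\<Prod>j\<in>e-{i}. x j)"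
        using prod.distinct_set_conv_list[OF d(1), of x] d(2) by simp
    qed
    also have "\<dots> = of_nat (fact (k-1)) * ?c * (\<Prod>j\<in>e-{i}. x j)"
      using fe e edge[of e] by simp
    also have "\<dots> = (\<Prod>j\<in>e-{i}. x j)" by simp
    finally show "(\<Sum>ys\<in>{ys\<in>?S'. set (i#ys) = e}. ?c * (\<Prod>j\<leftarrow>ys. x j)) = (\<Prod>j\<in>e-{i}. x j)" .
  qed
  finally show ?thesis .
qed


lemma cform_alpha:
  fixes x :: "nat \<Rightarrow> complex" and t :: complex
  assumes k: "k > 0" and sub: "\<forall>e\<in>E. e \<subseteq> {1..n}" and ck: "\<forall>e\<in>E. card e = k"
  shows "(\<exists>c. c \<noteq> 0 \<and> (\<forall>i\<in>{1..n}. x i ^ k = c) \<and> (\<forall>e\<in>E. (\<Prod>j\<in>e. x j) = t * c))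
     \<longleftrightarrow> (\<exists>\<gamma> \<alpha>. \<gamma> \<noteq> 0 \<and> (\<forall>i\<in>{1..n}. x i = \<gamma> * rho k (\<alpha> i)) \<and> (\<forall>e\<in>E. rho k (\<Sum>j\<in>e. \<alpha> j) = t))"
proof -
  have fine: "finite e" if "e \<in> E" for e using ck that k by (metis card_ge_0_finite)
  have prodform: "(\<Prod>j\<in>e. x j) = \<gamma> ^ k * rho k (\<Sum>j\<in>e. \<alpha> j)"
    if e: "e \<in> E" and xf: "\<forall>i\<in>{1..n}. x i = \<gamma> * rho k (\<alpha> i)" for e \<gamma> \<alpha>
  proof -
    have "(\<Prod>j\<in>e. x j) = (\<Prod>j\<in>e. \<gamma> * rho k (\<alpha> j))"
      using e xf sub by (intro prod.cong) blast+
    also have "\<dots> = \<gamma> ^ card e * (\<Prod>j\<in>e. rho k (\<alpha> j))" by (simp add: prod.distrib)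
    also have "\<dots> = \<gamma> ^ k * rho k (\<Sum>j\<in>e. \<alpha> j)" using ck e fine[OF e] by (simp add: rho_sum)
    finally show ?thesis .
  qed
  show ?thesis
  proof
    assume "\<exists>c. c \<noteq> 0 \<and> (\<forall>i\<in>{1..n}. x i ^ k = c) \<and> (\<forall>e\<in>E. (\<Prod>j\<in>e. x j) = t * c)"
    then obtain c where c: "c \<noteq> 0" "\<forall>i\<in>{1..n}. x i ^ k = c" "\<forall>e\<in>E. (\<Prod>j\<in>e. x j) = t * c" by blast
    define \<gamma> where "\<gamma> = exp (Ln c / of_nat k)"
    have "\<gamma> ^ k = exp (of_nat k * (Ln c / of_nat k))" unfolding \<gamma>_def by (rule exp_of_nat_mult[symmetric])
    also have "of_nat k * (Ln c / of_nat k) = Ln c" using k by simp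
    also have "exp (Ln c) = c" using c(1) by simp
    finally have gk: "\<gamma> ^ k = c" .
    have g0: "\<gamma> \<noteq> 0" by (simp add: \<gamma>_def)
    have "\<forall>i\<in>{1..n}. \<exists>m. x i = \<gamma> * rho k m"
    proof
      fix i assume i: "i \<in> {1..n}"
      have "(x i / \<gamma>) ^ k = 1" using c(1) c(2) i gk by (simp add: power_divide)
      then obtain m where "x i / \<gamma> = rho k m" using root_unity k by blast
      then have "x i = \<gamma> * rho k m" using g0 by (simp add: field_simps)
      then show "\<exists>m. x i = \<gamma> * rho k m" ..
    qed
    then obtain \<alpha> where \<alpha>: "\<forall>i\<in>{1..n}. x i = \<gamma> * rho k (\<alpha> i)" by (metis bchoice)
    have "\<forall>e\<in>E. rho k (\<Sum>j\<in>e. \<alpha> j) = t"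
    proof
      fix e assume e: "e \<in> E"
      have "\<gamma> ^ k * rho k (\<Sum>j\<in>e. \<alpha> j) = t * c" using prodform[OF e \<alpha>] c(3) e by simp
      then have "\<gamma> ^ k * rho k (\<Sum>j\<in>e. \<alpha> j) = \<gamma> ^ k * t" using gk by (metis mult.commute)
      then show "rho k (\<Sum>j\<in>e. \<alpha> j) = t" using g0 by simp
    qed
    then show "\<exists>\<gamma> \<alpha>. \<gamma> \<noteq> 0 \<and> (\<forall>i\<in>{1..n}. x i = \<gamma> * rho k (\<alpha> i)) \<and> (\<forall>e\<in>E. rho k (\<Sum>j\<in>e. \<alpha> j) = t)"
      using g0 \<alpha> by blast
  next
    assume "\<exists>\<gamma> \<alpha>. \<gamma> \<noteq> 0 \<and> (\<forall>i\<in>{1..n}. x i = \<gamma> * rho k (\<alpha> i)) \<and> (\<forall>e\<in>E. rho k (\<Sum>j\<in>e. \<alpha> j) = t)"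
    then obtain \<gamma> \<alpha> where g: "\<gamma> \<noteq> 0" "\<forall>i\<in>{1..n}. x i = \<gamma> * rho k (\<alpha> i)" "\<forall>e\<in>E. rho k (\<Sum>j\<in>e. \<alpha> j) = t"
      by blast
    have "\<forall>i\<in>{1..n}. x i ^ k = \<gamma> ^ k" using g(2) rho_pow[OF k] by (simp add: power_mult_distrib)
    moreover have "\<forall>e\<in>E. (\<Prod>j\<in>e. x j) = t * \<gamma> ^ k"
    proof
      fix e assume e: "e \<in> E"
      have "(\<Prod>j\<in>e. x j) = \<gamma> ^ k * rho k (\<Sum>j\<in>e. \<alpha> j)" by (rule prodform[OF e g(2)])
      then show "(\<Prod>j\<in>e. x j) = t * \<gamma> ^ k" using g(3) e by (simp add: mult.commute)
    qed
    moreover have "\<gamma> ^ k \<noteq> 0" using g(1) by simp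
    ultimately show "\<exists>c. c \<noteq> 0 \<and> (\<forall>i\<in>{1..n}. x i ^ k = c) \<and> (\<forall>e\<in>E. (\<Prod>j\<in>e. x j) = t * c)"
      by blast
  qed
qed

lemma lap_apply:
  "tensor_apply n k (laplacian_tensor k E) x i = tensor_apply n k (deg_tensor E) x i - tensor_apply n k (adj_tensor k E) x i"
  unfolding tensor_apply_def laplacian_tensor_def by (simp add: sum_subtractf[symmetric] left_diff_distrib)

lemma slap_apply:
  "tensor_apply n k (signless_laplacian_tensor k E) x i = tensor_apply n k (deg_tensor E) x i + tensor_apply n k (adj_tensor k E) x i"
  unfolding tensor_apply_def signless_laplacian_tensor_def by (simp add: sum.distrib[symmetric] distrib_right)

lemma tt_iff:
  fixes t S D :: complex
  assumes tt: "t * t = 1"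
  shows "(t * S = D) \<longleftrightarrow> (S = t * D)"
proof
  assume "t * S = D"
  then have "t * (t * S) = t * D" by simp
  then show "S = t * D" using tt by (simp add: mult.assoc[symmetric])
next
  assume "S = t * D"
  then have "t * S = (t * t) * D" by (simp add: mult.assoc)
  then show "t * S = D" using tt by simp
qed

lemma eig_gen:
  fixes x :: "nat \<Rightarrow> complex" and t :: complex
  assumes k3: "k \<ge> 3" and U: "uniform_hypergraph n k E" and C: "hg_connected n E"
    and t: "t = 1 \<or> t = -1"
    and T: "\<forall>i\<in>{1..n}. tensor_apply n k TT x i = of_nat (hg_degree E i) * x i ^ (k-1) - t * (\<Sum>e\<in>{e\<in>E. i\<in>e}. \<Prod>j\<in>e-{i}. x j)"
  shows "tensor_eigenpair n k TT 0 x \<longleftrightarrow>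
     (\<exists>\<gamma> \<alpha>. \<gamma> \<noteq> 0 \<and> (\<forall>i\<in>{1..n}. x i = \<gamma> * rho k (\<alpha> i)) \<and> (\<forall>e\<in>E. rho k (\<Sum>j\<in>e. \<alpha> j) = t))"
proof -
  have sub: "\<forall>e\<in>E. e \<subseteq> {1..n}" and ck: "\<forall>e\<in>E. card e = k"
    using U by (auto simp: uniform_hypergraph_def)
  have tt: "t * t = 1" using t by auto
  have "tensor_eigenpair n k TT 0 x \<longleftrightarrow> ((\<exists>i\<in>{1..n}. x i \<noteq> 0) \<and> (\<forall>i\<in>{1..n}. (\<Sum>e\<in>{e\<in>E. i\<in>e}. \<Prod>j\<in>e-{i}. x j) = t * of_nat (hg_degree E i) * x i ^ (k-1)))"
  proof -
    have "tensor_apply n k TT x i = 0 \<longleftrightarrow> (\<Sum>e\<in>{e\<in>E. i\<in>e}. \<Prod>j\<in>e-{i}. x j) = t * of_nat (hg_degree E i) * x i ^ (k-1)"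
      if i: "i \<in> {1..n}" for i
    proof -
      have "tensor_apply n k TT x i = 0 \<longleftrightarrow> t * (\<Sum>e\<in>{e\<in>E. i\<in>e}. \<Prod>j\<in>e-{i}. x j) = of_nat (hg_degree E i) * x i ^ (k-1)"
        using T i by auto
      also have "\<dots> \<longleftrightarrow> (\<Sum>e\<in>{e\<in>E. i\<in>e}. \<Prod>j\<in>e-{i}. x j) = t * (of_nat (hg_degree E i) * x i ^ (k-1))"
        by (rule tt_iff[OF tt])
      also have "\<dots> \<longleftrightarrow> (\<Sum>e\<in>{e\<in>E. i\<in>e}. \<Prod>j\<in>e-{i}. x j) = t * of_nat (hg_degree E i) * x i ^ (k-1)"
        by (simp add: mult.assoc)
      finally show ?thesis .
    qed
    then show ?thesis unfolding tensor_eigenpair_def by auto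
  qed
  also have "\<dots> \<longleftrightarrow> (\<exists>c. c \<noteq> 0 \<and> (\<forall>i\<in>{1..n}. x i ^ k = c) \<and> (\<forall>e\<in>E. (\<Prod>j\<in>e. x j) = t * c))"
    by (rule eig_char[OF k3 U C t])
  also have "\<dots> \<longleftrightarrow> (\<exists>\<gamma> \<alpha>. \<gamma> \<noteq> 0 \<and> (\<forall>i\<in>{1..n}. x i = \<gamma> * rho k (\<alpha> i)) \<and> (\<forall>e\<in>E. rho k (\<Sum>j\<in>e. \<alpha> j) = t))"
    by (rule cform_alpha) (use k3 sub ck in auto)
  finally show ?thesis .
qed

theorem theorem4p1:
  fixes n k :: nat and E :: "nat set set"
  assumes "k \<ge> 3" and "uniform_hypergraph n k E" and "hg_connected n E" and "E \<noteq> {}"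
  shows "(\<forall>x :: nat \<Rightarrow> complex. tensor_eigenpair n k (laplacian_tensor k E) 0 x \<longleftrightarrow>
            (\<exists>\<gamma> :: complex. \<exists>\<alpha> :: nat \<Rightarrow> int. \<gamma> \<noteq> 0 \<and>
               (\<forall>i\<in>{1..n}. x i = \<gamma> * exp (complex_of_real (2 * real_of_int (\<alpha> i) * pi / real k) * \<i>)) \<and>
               (\<forall>e\<in>E. \<exists>\<sigma> :: int. (\<Sum>j\<in>e. \<alpha> j) = \<sigma> * int k)))
       \<and> (\<forall>x :: nat \<Rightarrow> complex. tensor_eigenpair n k (signless_laplacian_tensor k E) 0 x \<longleftrightarrow>
            (\<exists>\<gamma> :: complex. \<exists>\<alpha> :: nat \<Rightarrow> int. \<gamma> \<noteq> 0 \<and>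
               (\<forall>i\<in>{1..n}. x i = \<gamma> * exp (complex_of_real (2 * real_of_int (\<alpha> i) * pi / real k) * \<i>)) \<and>
               (\<forall>e\<in>E. \<exists>\<sigma> :: int. 2 * (\<Sum>j\<in>e. \<alpha> j) = 2 * \<sigma> * int k + int k)))"
proof -
  have k0: "k > 0" using assms(1) by simp
  have L: "tensor_eigenpair n k (laplacian_tensor k E) 0 x \<longleftrightarrow>
     (\<exists>\<gamma> \<alpha>. \<gamma> \<noteq> 0 \<and> (\<forall>i\<in>{1..n}. x i = \<gamma> * rho k (\<alpha> i)) \<and> (\<forall>e\<in>E. \<exists>\<sigma> :: int. (\<Sum>j\<in>e. \<alpha> j) = \<sigma> * int k))"
    for x :: "nat \<Rightarrow> complex"
  proof -
    have "tensor_eigenpair n k (laplacian_tensor k E) 0 x \<longleftrightarrow>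
     (\<exists>\<gamma> \<alpha>. \<gamma> \<noteq> 0 \<and> (\<forall>i\<in>{1..n}. x i = \<gamma> * rho k (\<alpha> i)) \<and> (\<forall>e\<in>E. rho k (\<Sum>j\<in>e. \<alpha> j) = 1))"
      by (rule eig_gen[OF assms(1-3)]) (use assms(1) in \<open>simp_all add: lap_apply deg_apply adj_apply[OF assms(2)]\<close>)
    then show ?thesis by (simp add: rho_eq_1[OF k0])
  qed
  have S: "tensor_eigenpair n k (signless_laplacian_tensor k E) 0 x \<longleftrightarrow>
     (\<exists>\<gamma> \<alpha>. \<gamma> \<noteq> 0 \<and> (\<forall>i\<in>{1..n}. x i = \<gamma> * rho k (\<alpha> i)) \<and> (\<forall>e\<in>E. \<exists>\<sigma> :: int. 2 * (\<Sum>j\<in>e. \<alpha> j) = 2 * \<sigma> * int k + int k))"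
    for x :: "nat \<Rightarrow> complex"
  proof -
    have "tensor_eigenpair n k (signless_laplacian_tensor k E) 0 x \<longleftrightarrow>
     (\<exists>\<gamma> \<alpha>. \<gamma> \<noteq> 0 \<and> (\<forall>i\<in>{1..n}. x i = \<gamma> * rho k (\<alpha> i)) \<and> (\<forall>e\<in>E. rho k (\<Sum>j\<in>e. \<alpha> j) = -1))"
      by (rule eig_gen[OF assms(1-3)]) (use assms(1) in \<open>simp_all add: slap_apply deg_apply adj_apply[OF assms(2)]\<close>)
    then show ?thesis by (simp add: rho_eq_m1[OF k0])
  qed
  show ?thesis using L S unfolding rho_def by blast
qed

end
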